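(* Assume ($\nu$0) and (H1), fix $\rho,h,r,\epsilon>0$, and let $\mu_1,\mu_2\in C([0,T],P(\mathbb{R}^d))$. Then there are constants $c,K>0$ depending only on $d$ such that $\sup_{t\in[0,T]}\|m^\epsilon_{\rho,h}[\mu_1](t,\cdot)-m^\epsilon_{\rho,h}[\mu_2](t,\cdot)\|_{L^1(\mathbb{R}^d)}\le\frac{cKT}{\rho}e^{-h\lambda_r}\big\|D_pH(\cdot,Du^\epsilon_{\rho,h}[\mu_1])-D_pH(\cdot,Du^\epsilon_{\rho,h}[\mu_2])\big\|_0$, where the sup norm on the right is over $[0,T]\times\mathbb{R}^d$.
   Context: $P(\mathbb{R}^d)$: Borel probability measures. $\|\cdot\|_0$ sup norm. $\nu$ nonnegative Radon measure on $\mathbb{R}^d\setminus\{0\}$, ($\nu$0) $\int1\wedge|z|^2\nu(dz)<\infty$. $H$ Hamiltonian; (H1) $D_pH$ continuous and $|D_pH(x,p)|\le C_R$ for $|p|\le R$. $m_0\in P(\mathbb{R}^d)$. Discretization: $h=T/N$, $t_k=kh$, $x_i=i\rho$ ($i\in\mathbb Z^d$), $\beta_i(x)=\prod_l\max\{0,1-|x_l-(x_i)_l|/\rho\}$; $b_r=\int_{r<|z|<1}z\nu(dz)$, $\sigma_r=(\frac12\int_{|z|<r}zz^T\nu(dz))^{1/2}$ with columns $\sigma_r^p$, $\lambda_r=\nu(\{|z|>r\})$. For each $\mu$, $u^\epsilon_{\rho,h}[\mu]$ is the mollified (in $x$, by a standard mollifier at scale $\epsilon$) piecewise multilinear interpolation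 of the solution of the discrete semi-Lagrangian HJB scheme with data $F(\cdot,\mu(t_k))$, $G(\cdot,\mu(T))$; it is smooth and Lipschitz in $x$. Discrete FPK: with $w=u^\epsilon_{\rho,h}[\mu]$, $\Phi^{\epsilon,\pm}_{j,k,p}=x_j-h(D_pH(x_j,Dw(t_k,x_j))+b_r)\pm\sqrt{hd}\sigma_r^p$, $\mathbf B(i,j,k)=\frac{e^{-h\lambda_r}}{2d}\sum_{p=1}^d(\beta_i(\Phi^{\epsilon,+}_{j,k,p})+\beta_i(\Phi^{\epsilon,-}_{j,k,p}))+\frac{1-e^{-h\lambda_r}}{\lambda_r}\int_{|z|>r}\beta_i(x_j+z)\nu(dz)$, $E_i=x_i+\frac\rho2(-1,1)^d$, $m_{i,0}=m_0(E_i)$, $m_{i,k+1}=\sum_jm_{j,k}\mathbf B(i,j,k)$; $m^\epsilon_{\rho,h}[\mu](t_k,x)=\rho^{-d}\sum_im_{i,k}\mathbb 1_{E_i}(x)$, linear in $t$ on $[t_k,t_{k+1}]$. *)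

theory Defs
  imports "HOL-Probability.Probability"
begin

definition gridpt :: "real \<Rightarrow> int^'n \<Rightarrow> real^'n" where
  "gridpt \<rho> i = (\<chi> l. \<rho> * of_int (i $ l))"

definition hatfun :: "real \<Rightarrow> int^'n \<Rightarrow> real^'n \<Rightarrow> real" where
  "hatfun \<rho> i x = (\<Prod>l\<in>UNIV. max 0 (1 - \<bar>x $ l - gridpt \<rho> i $ l\<bar> / \<rho>))"

definition cell :: "real \<Rightarrow> int^'n \<Rightarrow> (real^'n) set" where
  "cell \<rho> i = {x. \<forall>l. \<bar>x $ l - gridpt \<rho> i $ l\<bar> < \<rho> / 2}"

definition drift_b :: "(real^'n) measure \<Rightarrow> real \<Rightarrow> real^'n" where
  "drift_b \<nu> r = set_lebesgue_integral \<nu> {z. r < norm z \<and> norm z < 1} (\<lambda>z. z)"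

definition small_cov :: "(real^'n) measure \<Rightarrow> real \<Rightarrow> real^'n^'n" where
  "small_cov \<nu> r = (\<chi> i j. (1/2) * set_lebesgue_integral \<nu> {z. norm z < r} (\<lambda>z. z $ i * z $ j))"

definition psd_sqrt :: "real^'n^'n \<Rightarrow> real^'n^'n" where
  "psd_sqrt A = (THE S. transpose S = S \<and> (\<forall>v. 0 \<le> v \<bullet> (S *v v)) \<and> S ** S = A)"

definition sigma_col :: "(real^'n) measure \<Rightarrow> real \<Rightarrow> 'n \<Rightarrow> real^'n" where
  "sigma_col \<nu> r p = column p (psd_sqrt (small_cov \<nu> r))"

definition jump_rate :: "(real^'n) measure \<Rightarrow> real \<Rightarrow> real" where
  "jump_rate \<nu> r = measure \<nu> {z. r < norm z}"

text \<open>Transition weights B(i,j,k). DpH is D_pH; Dw t x is the spatial gradient of w = u[mu] at (t,x).\<close>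

definition Bker :: "(real^'n) measure \<Rightarrow> (real^'n \<Rightarrow> real^'n \<Rightarrow> real^'n)
    \<Rightarrow> (real \<Rightarrow> real^'n \<Rightarrow> real^'n) \<Rightarrow> real \<Rightarrow> real \<Rightarrow> real
    \<Rightarrow> nat \<Rightarrow> int^'n \<Rightarrow> int^'n \<Rightarrow> real" where
  "Bker \<nu> DpH Dw \<rho> h r k i j =
     (let xj = gridpt \<rho> j;
          lam = jump_rate \<nu> r;
          d = real CARD('n);
          c = xj - h *\<^sub>R (DpH xj (Dw (real k * h) xj) + drift_b \<nu> r)
      in exp (- h * lam) / (2 * d) *
           (\<Sum>p\<in>UNIV. hatfun \<rho> i (c + sqrt (h * d) *\<^sub>R sigma_col \<nu> r p)
                     + hatfun \<rho> i (c - sqrt (h * d) *\<^sub>R sigma_col \<nu> r p))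
         + (1 - exp (- h * lam)) / lam *
           set_lebesgue_integral \<nu> {z. r < norm z} (\<lambda>z. hatfun \<rho> i (xj + z)))"

fun fpk_mass :: "(real^'n) measure \<Rightarrow> (real^'n \<Rightarrow> real^'n \<Rightarrow> real^'n)
    \<Rightarrow> (real \<Rightarrow> real^'n \<Rightarrow> real^'n) \<Rightarrow> real \<Rightarrow> real \<Rightarrow> real
    \<Rightarrow> (real^'n) measure \<Rightarrow> nat \<Rightarrow> int^'n \<Rightarrow> real" where
  "fpk_mass \<nu> DpH Dw \<rho> h r m0 0 i = measure m0 (cell \<rho> i)"
| "fpk_mass \<nu> DpH Dw \<rho> h r m0 (Suc k) i =
     (\<Sum>\<^sub>\<infinity>j. fpk_mass \<nu> DpH Dw \<rho> h r m0 k j * Bker \<nu> DpH Dw \<rho> h r k i j)"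

definition fpk_dens_k :: "(real^'n) measure \<Rightarrow> (real^'n \<Rightarrow> real^'n \<Rightarrow> real^'n)
    \<Rightarrow> (real \<Rightarrow> real^'n \<Rightarrow> real^'n) \<Rightarrow> real \<Rightarrow> real \<Rightarrow> real
    \<Rightarrow> (real^'n) measure \<Rightarrow> nat \<Rightarrow> real^'n \<Rightarrow> real" where
  "fpk_dens_k \<nu> DpH Dw \<rho> h r m0 k x =
     (\<Sum>\<^sub>\<infinity>i. fpk_mass \<nu> DpH Dw \<rho> h r m0 k i * indicator (cell \<rho> i) x) / \<rho> ^ CARD('n)"

definition fpk_dens :: "(real^'n) measure \<Rightarrow> (real^'n \<Rightarrow> real^'n \<Rightarrow> real^'n)
    \<Rightarrow> (real \<Rightarrow> real^'n \<Rightarrow> real^'n) \<Rightarrow> real \<Rightarrow> real \<Rightarrow> real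
    \<Rightarrow> (real^'n) measure \<Rightarrow> real \<Rightarrow> real^'n \<Rightarrow> real" where
  "fpk_dens \<nu> DpH Dw \<rho> h r m0 t x =
     (let k = nat \<lfloor>t / h\<rfloor>; s = t / h - real k
      in (1 - s) * fpk_dens_k \<nu> DpH Dw \<rho> h r m0 k x
         + s * fpk_dens_k \<nu> DpH Dw \<rho> h r m0 (Suc k) x)"

definition weakly_continuous_flow :: "real \<Rightarrow> (real \<Rightarrow> (real^'n) measure) \<Rightarrow> bool" where
  "weakly_continuous_flow T \<mu> \<longleftrightarrow>
     (\<forall>t\<in>{0..T}. prob_space (\<mu> t) \<and> sets (\<mu> t) = sets borel) \<and>
     (\<forall>f::real^'n \<Rightarrow> real. continuous_on UNIV f \<and> bounded (range f) \<longrightarrow>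
        continuous_on {0..T} (\<lambda>t. integral\<^sup>L (\<mu> t) f))"

end

theory Submission
  imports Defs
begin


lemma gridpt_nth[simp]: "gridpt \<rho> i $ l = \<rho> * of_int (i $ l)"
  by (simp add: gridpt_def)

definition phi1 :: "real \<Rightarrow> real \<Rightarrow> int \<Rightarrow> real" where
  "phi1 \<rho> t n = max 0 (1 - \<bar>t - \<rho> * of_int n\<bar> / \<rho>)"

lemma hatfun_phi: "hatfun \<rho> i x = (\<Prod>l\<in>UNIV. phi1 \<rho> (x $ l) (i $ l))"
  by (simp add: hatfun_def phi1_def)

lemma phi1_alt: "\<rho> > 0 \<Longrightarrow> phi1 \<rho> t n = max 0 (1 - \<bar>t / \<rho> - of_int n\<bar>)"
proof -
  assume r: "\<rho> > 0"
  have "\<bar>t - \<rho> * of_int n\<bar> / \<rho> = \<bar>t / \<rho> - of_int n\<bar>"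
  proof -
    have "(t - \<rho> * of_int n) / \<rho> = t / \<rho> - of_int n" using r by (simp add: diff_divide_distrib)
    moreover have "\<bar>t - \<rho> * of_int n\<bar> / \<rho> = \<bar>(t - \<rho> * of_int n) / \<rho>\<bar>" using r by simp
    ultimately show ?thesis by simp
  qed
  thus ?thesis by (simp add: phi1_def)
qed

lemma phi1_nonneg: "0 \<le> phi1 \<rho> t n" by (simp add: phi1_def)
lemma phi1_le1: "\<rho> > 0 \<Longrightarrow> phi1 \<rho> t n \<le> 1" by (simp add: phi1_def)

lemma phi1_lip: "\<rho> > 0 \<Longrightarrow> \<bar>phi1 \<rho> s n - phi1 \<rho> t n\<bar> \<le> \<bar>s - t\<bar> / \<rho>"
proof -
  assume r: "\<rho> > 0"
  have m: "\<bar>max 0 u - max 0 v\<bar> \<le> \<bar>u - v\<bar>" for u v :: real by (auto simp: max_def)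
  have "\<bar>phi1 \<rho> s n - phi1 \<rho> t n\<bar> \<le> \<bar>(1 - \<bar>s - \<rho> * of_int n\<bar> / \<rho>) - (1 - \<bar>t - \<rho> * of_int n\<bar> / \<rho>)\<bar>"
    unfolding phi1_def by (rule m)
  also have "\<dots> = \<bar>\<bar>t - \<rho> * of_int n\<bar> - \<bar>s - \<rho> * of_int n\<bar>\<bar> / \<rho>"
  proof -
    have "(1 - \<bar>s - \<rho> * of_int n\<bar> / \<rho>) - (1 - \<bar>t - \<rho> * of_int n\<bar> / \<rho>)
        = (\<bar>t - \<rho> * of_int n\<bar> - \<bar>s - \<rho> * of_int n\<bar>) / \<rho>"
      by (simp add: diff_divide_distrib)
    thus ?thesis using r by simp
  qed
  also have "\<dots> \<le> \<bar>s - t\<bar> / \<rho>"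
  proof (intro divide_right_mono)
    have "\<bar>\<bar>t - \<rho> * of_int n\<bar> - \<bar>s - \<rho> * of_int n\<bar>\<bar> \<le> \<bar>(t - \<rho> * of_int n) - (s - \<rho> * of_int n)\<bar>"
      by (rule abs_triangle_ineq3)
    thus "\<bar>\<bar>t - \<rho> * of_int n\<bar> - \<bar>s - \<rho> * of_int n\<bar>\<bar> \<le> \<bar>s - t\<bar>" by simp
  qed (use r in simp)
  finally show ?thesis .
qed

definition A4 :: "real \<Rightarrow> real \<Rightarrow> int set" where
  "A4 \<rho> t = (let a = \<lfloor>t / \<rho>\<rfloor> in {a - 1, a, a + 1, a + 2})"

lemma phi1_support: "\<rho> > 0 \<Longrightarrow> phi1 \<rho> t n \<noteq> 0 \<Longrightarrow> n = \<lfloor>t / \<rho>\<rfloor> \<or> n = \<lfloor>t / \<rho>\<rfloor> + 1"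
proof -
  assume r: "\<rho> > 0" and nz: "phi1 \<rho> t n \<noteq> 0"
  hence "\<bar>t / \<rho> - of_int n\<bar> < 1" by (auto simp: phi1_alt max_def split: if_splits)
  moreover have "of_int \<lfloor>t/\<rho>\<rfloor> \<le> t/\<rho>" "t/\<rho> < of_int \<lfloor>t/\<rho>\<rfloor> + 1" by linarith+
  ultimately have "\<lfloor>t/\<rho>\<rfloor> - 1 < n" "n < \<lfloor>t/\<rho>\<rfloor> + 2" by linarith+
  thus ?thesis by linarith
qed

lemma phi1_support2: "\<rho> > 0 \<Longrightarrow> \<bar>s - t\<bar> < \<rho> \<Longrightarrow> phi1 \<rho> s n \<noteq> 0 \<Longrightarrow> n \<in> A4 \<rho> t"
proof -
  assume r: "\<rho> > 0" and st: "\<bar>s - t\<bar> < \<rho>" and nz: "phi1 \<rho> s n \<noteq> 0"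
  hence "\<bar>s / \<rho> - of_int n\<bar> < 1" by (auto simp: phi1_alt max_def split: if_splits)
  moreover have "\<bar>s/\<rho> - t/\<rho>\<bar> < 1" proof -
    have "s/\<rho> - t/\<rho> = (s - t)/\<rho>" by (simp add: diff_divide_distrib)
    hence "\<bar>s/\<rho> - t/\<rho>\<bar> = \<bar>s - t\<bar>/\<rho>" using r by simp
    thus ?thesis using st r by simp
  qed
  moreover have "of_int \<lfloor>t/\<rho>\<rfloor> \<le> t/\<rho>" "t/\<rho> < of_int \<lfloor>t/\<rho>\<rfloor> + 1" by linarith+
  ultimately have "\<lfloor>t/\<rho>\<rfloor> - 2 < n" "n < \<lfloor>t/\<rho>\<rfloor> + 3" by linarith+
  thus ?thesis unfolding A4_def Let_def by auto
qed

lemma phi1_support1: "\<rho> > 0 \<Longrightarrow> phi1 \<rho> t n \<noteq> 0 \<Longrightarrow> n \<in> A4 \<rho> t"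
  using phi1_support2[of \<rho> t t n] by simp

lemma card_A4: "card (A4 \<rho> t) = 4" by (simp add: A4_def Let_def)
lemma finite_A4: "finite (A4 \<rho> t)" by (simp add: A4_def Let_def)

lemma sum_A4: "\<rho> > 0 \<Longrightarrow> (\<Sum>n\<in>A4 \<rho> t. phi1 \<rho> t n) = 1"
proof -
  assume r: "\<rho> > 0"
  define a where "a = \<lfloor>t/\<rho>\<rfloor>"
  have h1: "of_int a \<le> t/\<rho>" "t/\<rho> < of_int a + 1" unfolding a_def by linarith+
  have "phi1 \<rho> t (a - 1) = 0" using h1 by (simp add: phi1_alt[OF r])
  moreover have "phi1 \<rho> t a = 1 - (t/\<rho> - of_int a)" using h1 by (simp add: phi1_alt[OF r])
  moreover have "phi1 \<rho> t (a+1) = t/\<rho> - of_int a" using h1 by (simp add: phi1_alt[OF r])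
  moreover have "phi1 \<rho> t (a+2) = 0" using h1 by (simp add: phi1_alt[OF r])
  moreover have "A4 \<rho> t = {a - 1, a, a + 1, a + 2}" unfolding A4_def Let_def a_def by simp
  moreover have "(\<Sum>n\<in>{a - 1, a, a + 1, a + 2}. phi1 \<rho> t n) =
      phi1 \<rho> t (a - 1) + phi1 \<rho> t a + phi1 \<rho> t (a + 1) + phi1 \<rho> t (a + 2)"
    by (simp add: algebra_simps)
  ultimately show ?thesis by simp
qed

definition Sbox :: "real \<Rightarrow> real^'n \<Rightarrow> (int^'n) set" where
  "Sbox \<rho> x = {i. \<forall>l. i $ l \<in> A4 \<rho> (x $ l)}"

lemma Sbox_image: "Sbox \<rho> x = vec_lambda ` PiE UNIV (\<lambda>l. A4 \<rho> (x $ l))"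
proof
  show "Sbox \<rho> x \<subseteq> vec_lambda ` PiE UNIV (\<lambda>l. A4 \<rho> (x $ l))"
  proof
    fix i assume "i \<in> Sbox \<rho> x"
    hence "(\<lambda>l. i $ l) \<in> PiE UNIV (\<lambda>l. A4 \<rho> (x $ l))" by (auto simp: Sbox_def)
    moreover have "i = vec_lambda (\<lambda>l. i $ l)" by simp
    ultimately show "i \<in> vec_lambda ` PiE UNIV (\<lambda>l. A4 \<rho> (x $ l))" by blast
  qed
qed (auto simp: Sbox_def)

lemma inj_vec_lambda: "inj_on (vec_lambda :: ('n::finite \<Rightarrow> 'a) \<Rightarrow> 'a^'n) A"
  by (auto simp: inj_on_def vec_lambda_inject)

lemma finite_Sbox: "finite (Sbox \<rho> x)"
  unfolding Sbox_image by (intro finite_imageI finite_PiE) (auto simp: finite_A4)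

lemma card_Sbox: "card (Sbox \<rho> (x::real^'n)) = 4 ^ CARD('n)"
  unfolding Sbox_image by (simp add: card_image inj_vec_lambda card_PiE card_A4)

lemma sum_Sbox: "\<rho> > 0 \<Longrightarrow> (\<Sum>i\<in>Sbox \<rho> x. hatfun \<rho> i x) = 1"
proof -
  assume r: "\<rho> > 0"
  have "(\<Sum>i\<in>Sbox \<rho> x. hatfun \<rho> i x) = (\<Sum>f\<in>PiE UNIV (\<lambda>l. A4 \<rho> (x $ l)). hatfun \<rho> (vec_lambda f) x)"
    unfolding Sbox_image by (simp add: sum.reindex inj_vec_lambda)
  also have "\<dots> = (\<Sum>f\<in>PiE UNIV (\<lambda>l. A4 \<rho> (x $ l)). \<Prod>l\<in>UNIV. phi1 \<rho> (x $ l) (f l))"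
    by (simp add: hatfun_phi)
  also have "\<dots> = (\<Prod>l\<in>UNIV. \<Sum>n\<in>A4 \<rho> (x $ l). phi1 \<rho> (x $ l) n)"
    by (rule prod_sum_PiE[symmetric]) (auto simp: finite_A4)
  also have "\<dots> = 1" by (simp add: sum_A4[OF r])
  finally show ?thesis .
qed

lemma hat_nonneg: "0 \<le> hatfun \<rho> i x"
  by (simp add: hatfun_phi prod_nonneg phi1_nonneg)

lemma hat_le1: "\<rho> > 0 \<Longrightarrow> hatfun \<rho> i x \<le> 1"
  by (simp add: hatfun_phi prod_le_1 phi1_nonneg phi1_le1)

lemma hat_support2: "\<rho> > 0 \<Longrightarrow> norm (x - y) < \<rho> \<Longrightarrow> hatfun \<rho> i y \<noteq> 0 \<Longrightarrow> i \<in> Sbox \<rho> x"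
proof -
  assume r: "\<rho> > 0" and xy: "norm (x - y) < \<rho>" and nz: "hatfun \<rho> i y \<noteq> 0"
  show ?thesis unfolding Sbox_def
  proof (intro CollectI allI)
    fix l
    have "phi1 \<rho> (y $ l) (i $ l) \<noteq> 0" using nz by (auto simp: hatfun_phi)
    moreover have "\<bar>y $ l - x $ l\<bar> < \<rho>"
      using component_le_norm_cart[of "y - x" l] xy by (simp add: norm_minus_commute)
    ultimately show "i $ l \<in> A4 \<rho> (x $ l)" using phi1_support2[OF r] by blast
  qed
qed

lemma hat_support: "\<rho> > 0 \<Longrightarrow> hatfun \<rho> i x \<noteq> 0 \<Longrightarrow> i \<in> Sbox \<rho> x"
  using hat_support2[of \<rho> x x i] by simp

lemma prod_diff_le:
  fixes a b :: "'a \<Rightarrow> real"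
  assumes "finite S" "\<And>l. 0 \<le> a l" "\<And>l. a l \<le> 1" "\<And>l. 0 \<le> b l" "\<And>l. b l \<le> 1"
  shows "\<bar>prod a S - prod b S\<bar> \<le> (\<Sum>l\<in>S. \<bar>a l - b l\<bar>)"
  using assms(1)
proof (induction S rule: finite_induct)
  case (insert l S)
  have "prod a (insert l S) - prod b (insert l S) = a l * (prod a S - prod b S) + (a l - b l) * prod b S"
    using insert by (simp add: algebra_simps)
  moreover have "\<bar>a l * (prod a S - prod b S)\<bar> \<le> \<bar>prod a S - prod b S\<bar>"
    using assms(2,3)[of l] by (simp add: abs_mult mult_left_le_one_le)
  moreover have "\<bar>(a l - b l) * prod b S\<bar> \<le> \<bar>a l - b l\<bar>"
    using assms(4,5) by (simp add: abs_mult prod_nonneg prod_le_1 mult_right_le_one_le)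
  ultimately show ?case using insert by simp
qed simp

lemma hat_lip: "\<rho> > 0 \<Longrightarrow> \<bar>hatfun \<rho> i x - hatfun \<rho> i y\<bar> \<le> real CARD('n) * norm (x - y) / \<rho>"
  for x y :: "real^'n"
proof -
  assume r: "\<rho> > 0"
  have "\<bar>hatfun \<rho> i x - hatfun \<rho> i y\<bar> \<le> (\<Sum>l\<in>UNIV. \<bar>phi1 \<rho> (x $ l) (i $ l) - phi1 \<rho> (y $ l) (i $ l)\<bar>)"
    unfolding hatfun_phi by (rule prod_diff_le) (auto simp: phi1_nonneg phi1_le1 r)
  also have "\<dots> \<le> (\<Sum>l\<in>(UNIV::'n set). norm (x - y) / \<rho>)"
  proof (rule sum_mono)
    fix l
    have "\<bar>phi1 \<rho> (x $ l) (i $ l) - phi1 \<rho> (y $ l) (i $ l)\<bar> \<le> \<bar>x $ l - y $ l\<bar> / \<rho>" by (rule phi1_lip[OF r])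
    also have "\<dots> \<le> norm (x - y) / \<rho>"
      using component_le_norm_cart[of "x - y" l] r by (simp add: divide_right_mono)
    finally show "\<bar>phi1 \<rho> (x $ l) (i $ l) - phi1 \<rho> (y $ l) (i $ l)\<bar> \<le> norm (x - y) / \<rho>" .
  qed
  finally show ?thesis by simp
qed

lemma hat_fin_sum: "\<rho> > 0 \<Longrightarrow> finite F \<Longrightarrow> (\<Sum>i\<in>F. hatfun \<rho> i x) \<le> 1"
proof -
  assume r: "\<rho> > 0" and F: "finite F"
  have "(\<Sum>i\<in>F. hatfun \<rho> i x) \<le> (\<Sum>i\<in>Sbox \<rho> x. hatfun \<rho> i x)"
  proof -
    have "(\<Sum>i\<in>F. hatfun \<rho> i x) = (\<Sum>i\<in>F \<inter> Sbox \<rho> x. hatfun \<rho> i x)"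
      by (rule sum.mono_neutral_right) (use hat_support[OF r] F in auto)
    also have "\<dots> \<le> (\<Sum>i\<in>Sbox \<rho> x. hatfun \<rho> i x)"
      by (rule sum_mono2) (auto simp: finite_Sbox hat_nonneg)
    finally show ?thesis .
  qed
  thus ?thesis using sum_Sbox[OF r, of x] by linarith
qed



lemma fin_bound:
  fixes f :: "'a \<Rightarrow> real"
  assumes "\<And>i. 0 \<le> f i" "\<And>F. finite F \<Longrightarrow> sum f F \<le> B"
  shows "f summable_on UNIV" "infsum f UNIV \<le> B"
proof -
  show s: "f summable_on UNIV"
    by (rule nonneg_bdd_above_summable_on) (use assms in \<open>auto intro!: bdd_aboveI2\<close>)
  show "infsum f UNIV \<le> B"
    by (rule infsum_le_finite_sums[OF s]) (use assms in auto)
qed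

definition Lhat :: "'n::finite itself \<Rightarrow> real" where
  "Lhat _ = 4 ^ CARD('n) * real CARD('n) + 2"

lemma Lhat_pos: "Lhat TYPE('n::finite) > 0"
  by (simp add: Lhat_def add_nonneg_pos)

lemma hat_lip_fin:
  fixes x y :: "real^'n"
  assumes r: "\<rho> > 0" and F: "finite F"
  shows "(\<Sum>i\<in>F. \<bar>hatfun \<rho> i x - hatfun \<rho> i y\<bar>) \<le> Lhat TYPE('n) * norm (x - y) / \<rho>"
proof (cases "norm (x - y) < \<rho>")
  case True
  have "(\<Sum>i\<in>F. \<bar>hatfun \<rho> i x - hatfun \<rho> i y\<bar>) = (\<Sum>i\<in>F \<inter> Sbox \<rho> x. \<bar>hatfun \<rho> i x - hatfun \<rho> i y\<bar>)"
  proof (rule sum.mono_neutral_right)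
    show "\<forall>i\<in>F - F \<inter> Sbox \<rho> x. \<bar>hatfun \<rho> i x - hatfun \<rho> i y\<bar> = 0"
    proof
      fix i assume "i \<in> F - F \<inter> Sbox \<rho> x"
      hence "hatfun \<rho> i x = 0" "hatfun \<rho> i y = 0"
        using hat_support[OF r, of i x] hat_support2[OF r True, of i] by auto
      thus "\<bar>hatfun \<rho> i x - hatfun \<rho> i y\<bar> = 0" by simp
    qed
  qed (use F in auto)
  also have "\<dots> \<le> (\<Sum>i\<in>Sbox \<rho> x. \<bar>hatfun \<rho> i x - hatfun \<rho> i y\<bar>)"
    by (rule sum_mono2) (auto simp: finite_Sbox)
  also have "\<dots> \<le> (\<Sum>i\<in>Sbox \<rho> x. real CARD('n) * norm (x - y) / \<rho>)"
    by (rule sum_mono) (rule hat_lip[OF r])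
  also have "\<dots> = 4 ^ CARD('n) * (real CARD('n) * norm (x - y) / \<rho>)"
    by (simp add: card_Sbox)
  also have "\<dots> \<le> Lhat TYPE('n) * norm (x - y) / \<rho>"
    using r by (simp add: Lhat_def field_simps)
  finally show ?thesis .
next
  case False
  have "(\<Sum>i\<in>F. \<bar>hatfun \<rho> i x - hatfun \<rho> i y\<bar>) \<le> (\<Sum>i\<in>F. hatfun \<rho> i x + hatfun \<rho> i y)"
    by (rule sum_mono) (use hat_nonneg in \<open>auto simp: abs_if\<close>)
  also have "\<dots> \<le> 2" using hat_fin_sum[OF r F, of x] hat_fin_sum[OF r F, of y]
    by (simp add: sum.distrib)
  also have "2 \<le> 2 * norm (x - y) / \<rho>" using False r by (simp add: field_simps)
  also have "\<dots> \<le> Lhat TYPE('n) * norm (x - y) / \<rho>"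
    using r by (intro divide_right_mono mult_right_mono) (auto simp: Lhat_def)
  finally show ?thesis .
qed

lemma hat_cont: "\<rho> > 0 \<Longrightarrow> continuous_on UNIV (hatfun \<rho> i)"
  unfolding hatfun_def by (intro continuous_intros) auto

lemma hat_meas: assumes r: "\<rho> > 0" shows "hatfun \<rho> i \<in> borel_measurable borel"
  by (rule borel_measurable_continuous_onI[OF hat_cont[OF r]])



definition Jt :: "(real^'n) measure \<Rightarrow> real \<Rightarrow> real \<Rightarrow> int^'n \<Rightarrow> real^'n \<Rightarrow> real" where
  "Jt \<nu> \<rho> r i xj = set_lebesgue_integral \<nu> {z. r < norm z} (\<lambda>z. hatfun \<rho> i (xj + z))"

definition Pt :: "(real^'n) measure \<Rightarrow> real \<Rightarrow> real \<Rightarrow> real \<Rightarrow> int^'n \<Rightarrow> real^'n \<Rightarrow> real" where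
  "Pt \<nu> \<rho> h r i c = (\<Sum>p\<in>UNIV. hatfun \<rho> i (c + sqrt (h * real CARD('n)) *\<^sub>R sigma_col \<nu> r p)
                     + hatfun \<rho> i (c - sqrt (h * real CARD('n)) *\<^sub>R sigma_col \<nu> r p))"

definition cpt :: "(real^'n) measure \<Rightarrow> (real^'n \<Rightarrow> real^'n \<Rightarrow> real^'n)
    \<Rightarrow> (real \<Rightarrow> real^'n \<Rightarrow> real^'n) \<Rightarrow> real \<Rightarrow> real \<Rightarrow> real \<Rightarrow> nat \<Rightarrow> int^'n \<Rightarrow> real^'n" where
  "cpt \<nu> DpH Dw \<rho> h r k j = gridpt \<rho> j - h *\<^sub>R (DpH (gridpt \<rho> j) (Dw (real k * h) (gridpt \<rho> j)) + drift_b \<nu> r)"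

lemma Bker_split:
  fixes \<nu> :: "(real^'n) measure"
  shows "Bker \<nu> DpH Dw \<rho> h r k i j =
   exp (- h * jump_rate \<nu> r) / (2 * real CARD('n)) * Pt \<nu> \<rho> h r i (cpt \<nu> DpH Dw \<rho> h r k j)
   + (1 - exp (- h * jump_rate \<nu> r)) / jump_rate \<nu> r * Jt \<nu> \<rho> r i (gridpt \<rho> j)"
  unfolding Bker_def Let_def Pt_def cpt_def Jt_def ..

lemma Jt_nonneg: "0 \<le> Jt \<nu> \<rho> r i xj"
  unfolding Jt_def set_lebesgue_integral_def by (rule Bochner_Integration.integral_nonneg) (simp add: hat_nonneg)

lemma jump_set_sets: assumes nu: "sets \<nu> = sets borel" shows "{z::real^'n. r < norm z} \<in> sets \<nu>"
proof -
  have "open {z::real^'n. r < norm z}" by (intro open_Collect_less continuous_intros)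
  thus ?thesis using nu by simp
qed

lemma Jt_fin:
  fixes \<nu> :: "(real^'n) measure"
  assumes nu: "sets \<nu> = sets borel" and fin: "emeasure \<nu> {z. r < norm z} < \<infinity>"
    and r: "\<rho> > 0" and F: "finite F"
  shows "(\<Sum>i\<in>F. Jt \<nu> \<rho> r i xj) \<le> jump_rate \<nu> r"
proof -
  define A where "A = {z::real^'n. r < norm z}"
  have A: "A \<in> sets \<nu>" unfolding A_def by (rule jump_set_sets[OF nu])
  have finA: "emeasure \<nu> A < \<infinity>" using fin by (simp add: A_def)
  have ind: "integrable \<nu> (indicator A :: _ \<Rightarrow> real)" using A finA by simp
  have meas: "(\<lambda>z. indicator A z *\<^sub>R hatfun \<rho> i (xj + z)) \<in> borel_measurable \<nu>" for i
  proof -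
    have "continuous_on UNIV (\<lambda>z. hatfun \<rho> i (xj + z))"
      by (rule continuous_on_compose2[OF hat_cont[OF r]]) (auto intro: continuous_intros)
    hence "(\<lambda>z. hatfun \<rho> i (xj + z)) \<in> borel_measurable borel"
      by (rule borel_measurable_continuous_onI)
    hence "(\<lambda>z. hatfun \<rho> i (xj + z)) \<in> borel_measurable \<nu>"
      by (simp add: measurable_cong_sets[OF nu refl])
    thus ?thesis using A by measurable
  qed
  have int: "integrable \<nu> (\<lambda>z. indicator A z *\<^sub>R hatfun \<rho> i (xj + z))" for i
    by (rule Bochner_Integration.integrable_bound[OF ind meas])
       (auto simp: indicator_def hat_nonneg hat_le1[OF r])
  have "(\<Sum>i\<in>F. Jt \<nu> \<rho> r i xj) = integral\<^sup>L \<nu> (\<lambda>z. \<Sum>i\<in>F. indicator A z *\<^sub>R hatfun \<rho> i (xj + z))"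
    unfolding Jt_def set_lebesgue_integral_def A_def[symmetric]
    by (rule Bochner_Integration.integral_sum[symmetric]) (rule int)
  also have "\<dots> \<le> integral\<^sup>L \<nu> (indicator A)"
  proof (rule Bochner_Integration.integral_mono'[OF ind])
    fix z
    have "(\<Sum>i\<in>F. indicator A z *\<^sub>R hatfun \<rho> i (xj + z)) = indicator A z * (\<Sum>i\<in>F. hatfun \<rho> i (xj + z))"
      by (simp add: sum_distrib_left)
    also have "\<dots> \<le> indicator A z * 1"
      by (rule mult_left_mono) (auto simp: hat_fin_sum[OF r F])
    finally show "(\<Sum>i\<in>F. indicator A z *\<^sub>R hatfun \<rho> i (xj + z)) \<le> indicator A z" by simp
  qed simp
  also have "\<dots> = jump_rate \<nu> r"
    using A by (simp add: jump_rate_def A_def Int_absorb2 sets.sets_into_space)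
  finally show ?thesis .
qed

lemma Pt_nonneg: "0 \<le> Pt \<nu> \<rho> h r i c"
  unfolding Pt_def by (intro sum_nonneg add_nonneg_nonneg hat_nonneg)

lemma Pt_fin:
  assumes r: "\<rho> > 0" and F: "finite F"
  shows "(\<Sum>i\<in>F. Pt \<nu> \<rho> h r i (c::real^'n)) \<le> 2 * real CARD('n)"
proof -
  have "(\<Sum>i\<in>F. Pt \<nu> \<rho> h r i c) = (\<Sum>p\<in>UNIV. (\<Sum>i\<in>F. hatfun \<rho> i (c + sqrt (h * real CARD('n)) *\<^sub>R sigma_col \<nu> r p))
                     + (\<Sum>i\<in>F. hatfun \<rho> i (c - sqrt (h * real CARD('n)) *\<^sub>R sigma_col \<nu> r p)))"
    unfolding Pt_def by (simp add: sum.swap[of _ F] sum.distrib)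
  also have "\<dots> \<le> (\<Sum>p\<in>(UNIV::'n set). 1 + 1)"
    by (intro sum_mono add_mono hat_fin_sum[OF r F])
  finally show ?thesis by simp
qed

lemma Pt_diff_fin:
  assumes r: "\<rho> > 0" and F: "finite F"
  shows "(\<Sum>i\<in>F. \<bar>Pt \<nu> \<rho> h r i (c1::real^'n) - Pt \<nu> \<rho> h r i c2\<bar>)
           \<le> 2 * real CARD('n) * (Lhat TYPE('n) * norm (c1 - c2) / \<rho>)"
proof -
  define s where "s p = sqrt (h * real CARD('n)) *\<^sub>R sigma_col \<nu> r p" for p
  have "(\<Sum>i\<in>F. \<bar>Pt \<nu> \<rho> h r i c1 - Pt \<nu> \<rho> h r i c2\<bar>)
      \<le> (\<Sum>i\<in>F. \<Sum>p\<in>UNIV. \<bar>hatfun \<rho> i (c1 + s p) - hatfun \<rho> i (c2 + s p)\<bar>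
                          + \<bar>hatfun \<rho> i (c1 - s p) - hatfun \<rho> i (c2 - s p)\<bar>)"
  proof (rule sum_mono)
    fix i
    have "Pt \<nu> \<rho> h r i c1 - Pt \<nu> \<rho> h r i c2 = (\<Sum>p\<in>UNIV. (hatfun \<rho> i (c1 + s p) - hatfun \<rho> i (c2 + s p))
                          + (hatfun \<rho> i (c1 - s p) - hatfun \<rho> i (c2 - s p)))"
      unfolding Pt_def s_def by (simp add: sum_subtractf[symmetric] algebra_simps)
    also have "\<bar>\<dots>\<bar> \<le> (\<Sum>p\<in>UNIV. \<bar>(hatfun \<rho> i (c1 + s p) - hatfun \<rho> i (c2 + s p))
                          + (hatfun \<rho> i (c1 - s p) - hatfun \<rho> i (c2 - s p))\<bar>)"
      by (rule sum_abs)
    also have "\<dots> \<le> (\<Sum>p\<in>UNIV. \<bar>hatfun \<rho> i (c1 + s p) - hatfun \<rho> i (c2 + s p)\<bar>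
                          + \<bar>hatfun \<rho> i (c1 - s p) - hatfun \<rho> i (c2 - s p)\<bar>)"
      by (intro sum_mono abs_triangle_ineq)
    finally show "\<bar>Pt \<nu> \<rho> h r i c1 - Pt \<nu> \<rho> h r i c2\<bar> \<le> \<dots>" .
  qed
  also have "\<dots> = (\<Sum>p\<in>UNIV. (\<Sum>i\<in>F. \<bar>hatfun \<rho> i (c1 + s p) - hatfun \<rho> i (c2 + s p)\<bar>)
                          + (\<Sum>i\<in>F. \<bar>hatfun \<rho> i (c1 - s p) - hatfun \<rho> i (c2 - s p)\<bar>))"
    by (simp add: sum.swap[of _ F] sum.distrib)
  also have "\<dots> \<le> (\<Sum>p\<in>(UNIV::'n set). Lhat TYPE('n) * norm (c1 - c2) / \<rho> + Lhat TYPE('n) * norm (c1 - c2) / \<rho>)"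
  proof (intro sum_mono add_mono)
    fix p
    show "(\<Sum>i\<in>F. \<bar>hatfun \<rho> i (c1 + s p) - hatfun \<rho> i (c2 + s p)\<bar>) \<le> Lhat TYPE('n) * norm (c1 - c2) / \<rho>"
      using hat_lip_fin[OF r F, of "c1 + s p" "c2 + s p"] by simp
    show "(\<Sum>i\<in>F. \<bar>hatfun \<rho> i (c1 - s p) - hatfun \<rho> i (c2 - s p)\<bar>) \<le> Lhat TYPE('n) * norm (c1 - c2) / \<rho>"
      using hat_lip_fin[OF r F, of "c1 - s p" "c2 - s p"] by simp
  qed
  finally show ?thesis using r by (simp add: field_simps)
qed



lemma jump_rate_nonneg: "0 \<le> jump_rate \<nu> r" by (simp add: jump_rate_def)

lemma Bker_nonneg:
  fixes \<nu> :: "(real^'n) measure"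
  assumes h: "0 \<le> h"
  shows "0 \<le> Bker \<nu> DpH Dw \<rho> h r k i j"
proof -
  have "exp (- h * jump_rate \<nu> r) \<le> 1" using h jump_rate_nonneg[of \<nu> r] by simp
  thus ?thesis unfolding Bker_split
    by (intro add_nonneg_nonneg mult_nonneg_nonneg divide_nonneg_nonneg Pt_nonneg Jt_nonneg jump_rate_nonneg) auto
qed

lemma Bker_fin:
  fixes \<nu> :: "(real^'n) measure"
  assumes nu: "sets \<nu> = sets borel" and fin: "emeasure \<nu> {z. r < norm z} < \<infinity>"
    and r: "\<rho> > 0" and h: "0 \<le> h" and F: "finite F"
  shows "(\<Sum>i\<in>F. Bker \<nu> DpH Dw \<rho> h r k i j) \<le> 1"
proof -
  define lam where "lam = jump_rate \<nu> r"
  define E where "E = exp (- h * lam)"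
  define d where "d = real CARD('n)"
  have lam: "0 \<le> lam" by (simp add: lam_def jump_rate_nonneg)
  have E: "0 < E" "E \<le> 1" using h lam by (auto simp: E_def)
  have d: "d > 0" by (simp add: d_def)
  have "(\<Sum>i\<in>F. Bker \<nu> DpH Dw \<rho> h r k i j)
      = E / (2 * d) * (\<Sum>i\<in>F. Pt \<nu> \<rho> h r i (cpt \<nu> DpH Dw \<rho> h r k j))
        + (1 - E) / lam * (\<Sum>i\<in>F. Jt \<nu> \<rho> r i (gridpt \<rho> j))"
    unfolding Bker_split by (simp add: sum.distrib sum_distrib_left E_def lam_def d_def)
  also have "\<dots> \<le> E / (2 * d) * (2 * d) + (1 - E) / lam * lam"
  proof (intro add_mono mult_left_mono)
    show "(\<Sum>i\<in>F. Pt \<nu> \<rho> h r i (cpt \<nu> DpH Dw \<rho> h r k j)) \<le> 2 * d"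
      unfolding d_def by (rule Pt_fin[OF r F])
    show "(\<Sum>i\<in>F. Jt \<nu> \<rho> r i (gridpt \<rho> j)) \<le> lam"
      unfolding lam_def by (rule Jt_fin[OF nu fin r F])
  qed (use E d lam in auto)
  also have "\<dots> \<le> 1"
  proof -
    have "(1 - E) / lam * lam \<le> 1 - E" using E by (cases "lam = 0") auto
    thus ?thesis using d by simp
  qed
  finally show ?thesis .
qed

lemma Bker_diff_fin:
  fixes \<nu> :: "(real^'n) measure"
  assumes r: "\<rho> > 0" and h: "0 \<le> h" and F: "finite F"
  shows "(\<Sum>i\<in>F. \<bar>Bker \<nu> DpH Dw1 \<rho> h r k i j - Bker \<nu> DpH Dw2 \<rho> h r k i j\<bar>)
    \<le> exp (- h * jump_rate \<nu> r) * Lhat TYPE('n) * h *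
       norm (DpH (gridpt \<rho> j) (Dw1 (real k * h) (gridpt \<rho> j)) - DpH (gridpt \<rho> j) (Dw2 (real k * h) (gridpt \<rho> j))) / \<rho>"
proof -
  define E where "E = exp (- h * jump_rate \<nu> r)"
  define d where "d = real CARD('n)"
  define c1 where "c1 = cpt \<nu> DpH Dw1 \<rho> h r k j"
  define c2 where "c2 = cpt \<nu> DpH Dw2 \<rho> h r k j"
  define \<Delta> where "\<Delta> = DpH (gridpt \<rho> j) (Dw1 (real k * h) (gridpt \<rho> j)) - DpH (gridpt \<rho> j) (Dw2 (real k * h) (gridpt \<rho> j))"
  have E: "0 < E" by (simp add: E_def)
  have d: "d > 0" by (simp add: d_def)
  have c12: "norm (c1 - c2) = h * norm \<Delta>"
  proof -
    have "c1 - c2 = - (h *\<^sub>R \<Delta>)" unfolding c1_def c2_def cpt_def \<Delta>_def by (simp add: algebra_simps)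
    thus ?thesis using h by simp
  qed
  have "(\<Sum>i\<in>F. \<bar>Bker \<nu> DpH Dw1 \<rho> h r k i j - Bker \<nu> DpH Dw2 \<rho> h r k i j\<bar>)
      = (\<Sum>i\<in>F. E / (2 * d) * \<bar>Pt \<nu> \<rho> h r i c1 - Pt \<nu> \<rho> h r i c2\<bar>)"
  proof (rule sum.cong[OF refl])
    fix i
    have "Bker \<nu> DpH Dw1 \<rho> h r k i j - Bker \<nu> DpH Dw2 \<rho> h r k i j = E / (2 * d) * (Pt \<nu> \<rho> h r i c1 - Pt \<nu> \<rho> h r i c2)"
      unfolding Bker_split E_def d_def c1_def c2_def by (simp add: algebra_simps)
    thus "\<bar>Bker \<nu> DpH Dw1 \<rho> h r k i j - Bker \<nu> DpH Dw2 \<rho> h r k i j\<bar> = E / (2 * d) * \<bar>Pt \<nu> \<rho> h r i c1 - Pt \<nu> \<rho> h r i c2\<bar>"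
      using E d by (simp add: abs_mult)
  qed
  also have "\<dots> = E / (2 * d) * (\<Sum>i\<in>F. \<bar>Pt \<nu> \<rho> h r i c1 - Pt \<nu> \<rho> h r i c2\<bar>)"
    by (simp add: sum_distrib_left)
  also have "\<dots> \<le> E / (2 * d) * (2 * d * (Lhat TYPE('n) * norm (c1 - c2) / \<rho>))"
    by (rule mult_left_mono) (use Pt_diff_fin[OF r F] E d in \<open>auto simp: d_def\<close>)
  also have "\<dots> = E * Lhat TYPE('n) * h * norm \<Delta> / \<rho>"
    using d by (simp add: c12 field_simps)
  finally show ?thesis unfolding E_def \<Delta>_def .
qed



lemma abs_lt_aux: "\<bar>y - c\<bar> < e \<longleftrightarrow> c - e < y \<and> y < c + (e::real)"
  by (auto simp: abs_less_iff)

lemma cell_box: "cell \<rho> i = box (\<chi> l. \<rho> * of_int (i $ l) - \<rho> / 2) (\<chi> l. \<rho> * of_int (i $ l) + \<rho> / 2)"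
  unfolding cell_def set_eq_iff mem_box_cart by (simp only: mem_Collect_eq vec_lambda_beta gridpt_nth abs_lt_aux simp_thms)

lemma cell_open: "open (cell \<rho> i)" unfolding cell_box by (rule open_box)

lemma cell_disj: "\<rho> > 0 \<Longrightarrow> x \<in> cell \<rho> i \<Longrightarrow> x \<in> cell \<rho> i' \<Longrightarrow> i = i'"
proof -
  assume r: "\<rho> > 0" and a: "x \<in> cell \<rho> i" and b: "x \<in> cell \<rho> i'"
  show "i = i'"
  proof (subst vec_eq_iff, intro allI)
    fix l
    have "\<bar>x $ l - \<rho> * of_int (i $ l)\<bar> < \<rho> / 2" "\<bar>x $ l - \<rho> * of_int (i' $ l)\<bar> < \<rho> / 2"
      using a b by (auto simp: cell_def)
    hence "\<bar>\<rho> * (of_int (i $ l) - of_int (i' $ l))\<bar> < \<rho>" by (simp add: algebra_simps abs_if split: if_splits)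
    hence "\<rho> * \<bar>of_int (i $ l) - of_int (i' $ l)\<bar> < \<rho> * 1" using r by (simp add: abs_mult)
    hence "\<bar>of_int (i $ l) - of_int (i' $ l)\<bar> < (1::real)" using r by (simp only: mult_less_cancel_left_pos)
    thus "i $ l = i' $ l" by linarith
  qed
qed

lemma emeasure_cell: "\<rho> > 0 \<Longrightarrow> emeasure lborel (cell \<rho> (i::int^'n)) = ennreal (\<rho> ^ CARD('n))"
proof -
  assume r: "\<rho> > 0"
  define a :: "real^'n" where "a = (\<chi> l. \<rho> * of_int (i $ l) - \<rho> / 2)"
  define b :: "real^'n" where "b = (\<chi> l. \<rho> * of_int (i $ l) + \<rho> / 2)"
  have ab: "\<And>v. v \<in> Basis \<Longrightarrow> (b - a) \<bullet> v = \<rho>"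
    by (auto simp: Basis_vec_def a_def b_def inner_axis)
  have "emeasure lborel (cell \<rho> i) = emeasure lborel (box a b)" by (simp add: cell_box a_def b_def)
  also have "\<dots> = ennreal (\<Prod>v\<in>Basis. (b - a) \<bullet> v)"
  proof (subst emeasure_lborel_box)
    fix v :: "real^'n" assume v: "v \<in> Basis"
    have "b \<bullet> v - a \<bullet> v = \<rho>" using ab[OF v] by (simp add: inner_diff_left)
    thus "a \<bullet> v \<le> b \<bullet> v" using r by simp
  qed (rule refl)
  also have "\<dots> = ennreal (\<Prod>v\<in>(Basis::(real^'n) set). \<rho>)" by (simp add: ab)
  also have "\<dots> = ennreal (\<rho> ^ CARD('n))" by simp
  finally show ?thesis .
qed

lemma mass0_fin:
  fixes m0 :: "(real^'n) measure"
  assumes pm: "prob_space m0" and sm: "sets m0 = sets borel" and r: "\<rho> > 0" and F: "finite F"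
  shows "(\<Sum>i\<in>F. measure m0 (cell \<rho> i)) \<le> 1"
proof -
  interpret prob_space m0 by (rule pm)
  have "(\<Sum>i\<in>F. measure m0 (cell \<rho> i)) = measure m0 (\<Union>i\<in>F. cell \<rho> i)"
  proof (rule measure_finite_Union[symmetric, OF F])
    show "cell \<rho> ` F \<subseteq> sets m0" using sm borel_open[OF cell_open] by auto
    show "disjoint_family_on (cell \<rho>) F" unfolding disjoint_family_on_def using cell_disj[OF r] by blast
  qed simp
  also have "\<dots> \<le> 1" by simp
  finally show ?thesis .
qed

lemma infsum_finsum:
  fixes f :: "'i \<Rightarrow> 'j \<Rightarrow> real"
  assumes F: "finite F" and s: "\<And>i. i \<in> F \<Longrightarrow> f i summable_on A"
  shows "(\<lambda>j. \<Sum>i\<in>F. f i j) summable_on A \<and> (\<Sum>i\<in>F. infsum (f i) A) = infsum (\<lambda>j. \<Sum>i\<in>F. f i j) A"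
  using F s
proof (induction F rule: finite_induct)
  case empty thus ?case by simp
next
  case (insert x F)
  hence IH: "(\<lambda>j. \<Sum>i\<in>F. f i j) summable_on A" "(\<Sum>i\<in>F. infsum (f i) A) = infsum (\<lambda>j. \<Sum>i\<in>F. f i j) A"
    by auto
  have fx: "f x summable_on A" using insert by auto
  show ?case using insert IH fx by (simp add: summable_on_add infsum_add)
qed



lemma summable_le_cmp:
  fixes f g :: "'a \<Rightarrow> real"
  assumes "f summable_on UNIV" "\<And>x. g x \<le> f x" "\<And>x. 0 \<le> g x"
  shows "g summable_on UNIV"
  by (rule summable_on_comparison_test[OF assms(1)]) (use assms in auto)

lemma abs_infsum_le:
  fixes u w :: "'a \<Rightarrow> real"
  assumes "u summable_on UNIV" "w summable_on UNIV" "\<And>x. \<bar>u x\<bar> \<le> w x"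
  shows "\<bar>infsum u UNIV\<bar> \<le> infsum w UNIV"
proof -
  have "infsum u UNIV \<le> infsum w UNIV" by (rule infsum_mono) (use assms in \<open>auto simp: abs_le_iff\<close>)
  moreover have "infsum (\<lambda>x. - u x) UNIV \<le> infsum w UNIV"
    by (rule infsum_mono) (use assms in \<open>auto simp: summable_on_uminus abs_le_iff\<close>)
  ultimately show ?thesis by (simp add: infsum_uminus)
qed

lemma mass_props:
  fixes \<nu> m0 :: "(real^'n) measure"
  assumes nu: "sets \<nu> = sets borel" and fin: "emeasure \<nu> {z. r < norm z} < \<infinity>"
    and pm: "prob_space m0" and sm: "sets m0 = sets borel" and r: "\<rho> > 0" and h: "0 \<le> h"
  shows "(\<forall>i. 0 \<le> fpk_mass \<nu> DpH Dw \<rho> h r m0 k i) \<and> fpk_mass \<nu> DpH Dw \<rho> h r m0 k summable_on UNIV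
         \<and> infsum (fpk_mass \<nu> DpH Dw \<rho> h r m0 k) UNIV \<le> 1"
proof (induction k)
  case 0
  have nn: "\<And>i. 0 \<le> fpk_mass \<nu> DpH Dw \<rho> h r m0 0 i" by simp
  have "\<And>F. finite F \<Longrightarrow> sum (fpk_mass \<nu> DpH Dw \<rho> h r m0 0) F \<le> 1"
    by (simp add: mass0_fin[OF pm sm r])
  thus ?case using fin_bound[of "fpk_mass \<nu> DpH Dw \<rho> h r m0 0" 1] nn by blast
next
  case (Suc k)
  define m where "m = fpk_mass \<nu> DpH Dw \<rho> h r m0 k"
  define B where "B = Bker \<nu> DpH Dw \<rho> h r k"
  have mnn: "\<And>j. 0 \<le> m j" and ms: "m summable_on UNIV" and m1: "infsum m UNIV \<le> 1"
    using Suc.IH by (auto simp: m_def)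
  have Bnn: "\<And>i j. 0 \<le> B i j" by (simp add: B_def Bker_nonneg[OF h])
  have Bfin: "\<And>F j. finite F \<Longrightarrow> (\<Sum>i\<in>F. B i j) \<le> 1" unfolding B_def by (rule Bker_fin[OF nu fin r h])
  have B1: "\<And>i j. B i j \<le> 1" using Bfin[of "{i}" for i] by simp
  have eq: "\<And>i. fpk_mass \<nu> DpH Dw \<rho> h r m0 (Suc k) i = infsum (\<lambda>j. m j * B i j) UNIV"
    by (simp add: m_def B_def)
  have gs: "\<And>i. (\<lambda>j. m j * B i j) summable_on UNIV"
    by (rule summable_le_cmp[OF ms]) (use mnn Bnn B1 in \<open>auto intro: mult_left_le mult_nonneg_nonneg\<close>)
  have nn: "\<And>i. 0 \<le> fpk_mass \<nu> DpH Dw \<rho> h r m0 (Suc k) i"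
    unfolding eq by (rule infsum_nonneg) (simp add: mnn Bnn)
  have "\<And>F. finite F \<Longrightarrow> sum (fpk_mass \<nu> DpH Dw \<rho> h r m0 (Suc k)) F \<le> 1"
  proof -
    fix F :: "(int^'n) set" assume F: "finite F"
    have X: "(\<lambda>j. \<Sum>i\<in>F. m j * B i j) summable_on UNIV \<and>
        (\<Sum>i\<in>F. infsum (\<lambda>j. m j * B i j) UNIV) = infsum (\<lambda>j. \<Sum>i\<in>F. m j * B i j) UNIV"
      by (rule infsum_finsum[OF F]) (rule gs)
    have "sum (fpk_mass \<nu> DpH Dw \<rho> h r m0 (Suc k)) F = (\<Sum>i\<in>F. infsum (\<lambda>j. m j * B i j) UNIV)"
      by (rule sum.cong[OF refl eq])
    also have "\<dots> = infsum (\<lambda>j. \<Sum>i\<in>F. m j * B i j) UNIV"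
      using X by blast
    also have "\<dots> \<le> infsum m UNIV"
    proof (rule infsum_mono)
      show "(\<lambda>j. \<Sum>i\<in>F. m j * B i j) summable_on UNIV" using X by blast
      show "m summable_on UNIV" by (rule ms)
      fix j
      have "(\<Sum>i\<in>F. m j * B i j) = m j * (\<Sum>i\<in>F. B i j)" by (simp add: sum_distrib_left)
      also have "\<dots> \<le> m j * 1" by (rule mult_left_mono[OF Bfin[OF F] mnn])
      finally show "(\<Sum>i\<in>F. m j * B i j) \<le> m j" by simp
    qed
    also have "\<dots> \<le> 1" by (rule m1)
    finally show "sum (fpk_mass \<nu> DpH Dw \<rho> h r m0 (Suc k)) F \<le> 1" .
  qed
  thus ?case using fin_bound[of "fpk_mass \<nu> DpH Dw \<rho> h r m0 (Suc k)" 1] nn by blast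
qed



lemma mass_diff:
  fixes \<nu> m0 :: "(real^'n) measure"
  assumes nu: "sets \<nu> = sets borel" and fin: "emeasure \<nu> {z. r < norm z} < \<infinity>"
    and pm: "prob_space m0" and sm: "sets m0 = sets borel" and r: "\<rho> > 0" and h: "0 \<le> h"
    and M0: "0 \<le> M"
  shows "(\<forall>k'<k. \<forall>j. norm (DpH (gridpt \<rho> j) (Dw1 (real k' * h) (gridpt \<rho> j))
                         - DpH (gridpt \<rho> j) (Dw2 (real k' * h) (gridpt \<rho> j))) \<le> M) \<longrightarrow>
    ((\<lambda>i. \<bar>fpk_mass \<nu> DpH Dw1 \<rho> h r m0 k i - fpk_mass \<nu> DpH Dw2 \<rho> h r m0 k i\<bar>) summable_on UNIV
     \<and> infsum (\<lambda>i. \<bar>fpk_mass \<nu> DpH Dw1 \<rho> h r m0 k i - fpk_mass \<nu> DpH Dw2 \<rho> h r m0 k i\<bar>) UNIV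
        \<le> real k * (exp (- h * jump_rate \<nu> r) * Lhat TYPE('n) * h * M / \<rho>))"
proof (induction k)
  case 0 show ?case by simp
next
  case (Suc k)
  show ?case
  proof
    assume hyp: "\<forall>k'<Suc k. \<forall>j. norm (DpH (gridpt \<rho> j) (Dw1 (real k' * h) (gridpt \<rho> j))
                         - DpH (gridpt \<rho> j) (Dw2 (real k' * h) (gridpt \<rho> j))) \<le> M"
    define C where "C = exp (- h * jump_rate \<nu> r) * Lhat TYPE('n) * h * M / \<rho>"
    have C0: "0 \<le> C" unfolding C_def using Lhat_pos[where 'n='n] h M0 r by simp
    define m1 where "m1 = fpk_mass \<nu> DpH Dw1 \<rho> h r m0 k"
    define m2 where "m2 = fpk_mass \<nu> DpH Dw2 \<rho> h r m0 k"
    define B1 where "B1 = Bker \<nu> DpH Dw1 \<rho> h r k"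
    define B2 where "B2 = Bker \<nu> DpH Dw2 \<rho> h r k"
    define D where "D = (\<lambda>j. \<bar>m1 j - m2 j\<bar>)"
    have IH: "D summable_on UNIV" "infsum D UNIV \<le> real k * C"
      using Suc.IH hyp by (auto simp: D_def m1_def m2_def C_def)
    have m1p: "\<And>j. 0 \<le> m1 j" "m1 summable_on UNIV"
      using mass_props[OF nu fin pm sm r h, of DpH Dw1 k] by (auto simp: m1_def)
    have m2p: "\<And>j. 0 \<le> m2 j" "m2 summable_on UNIV" "infsum m2 UNIV \<le> 1"
      using mass_props[OF nu fin pm sm r h, of DpH Dw2 k] by (auto simp: m2_def)
    have B1nn: "\<And>i j. 0 \<le> B1 i j" by (simp add: B1_def Bker_nonneg[OF h])
    have B2nn: "\<And>i j. 0 \<le> B2 i j" by (simp add: B2_def Bker_nonneg[OF h])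
    have B1fin: "\<And>F j. finite F \<Longrightarrow> (\<Sum>i\<in>F. B1 i j) \<le> 1" unfolding B1_def by (rule Bker_fin[OF nu fin r h])
    have B2fin: "\<And>F j. finite F \<Longrightarrow> (\<Sum>i\<in>F. B2 i j) \<le> 1" unfolding B2_def by (rule Bker_fin[OF nu fin r h])
    have B1le: "\<And>i j. B1 i j \<le> 1" using B1fin[of "{i}" for i] by simp
    have B2le: "\<And>i j. B2 i j \<le> 1" using B2fin[of "{i}" for i] by simp
    have dBle: "\<bar>B1 i j - B2 i j\<bar> \<le> 1" for i j
      using B1nn[of i j] B2nn[of i j] B1le[of i j] B2le[of i j] by (simp add: abs_le_iff)
    have dBfin: "\<And>F j. finite F \<Longrightarrow> (\<Sum>i\<in>F. \<bar>B1 i j - B2 i j\<bar>) \<le> C"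
    proof -
      fix F :: "(int^'n) set" and j assume F: "finite F"
      have "(\<Sum>i\<in>F. \<bar>B1 i j - B2 i j\<bar>) \<le> exp (- h * jump_rate \<nu> r) * Lhat TYPE('n) * h *
         norm (DpH (gridpt \<rho> j) (Dw1 (real k * h) (gridpt \<rho> j)) - DpH (gridpt \<rho> j) (Dw2 (real k * h) (gridpt \<rho> j))) / \<rho>"
        unfolding B1_def B2_def by (rule Bker_diff_fin[OF r h F])
      also have "\<dots> \<le> C" unfolding C_def using hyp Lhat_pos[where 'n='n] h r
        by (intro divide_right_mono mult_left_mono) auto
      finally show "(\<Sum>i\<in>F. \<bar>B1 i j - B2 i j\<bar>) \<le> C" .
    qed
    have g1s: "\<And>i. (\<lambda>j. m1 j * B1 i j) summable_on UNIV"
      by (rule summable_le_cmp[OF m1p(2)]) (use m1p B1nn B1le in \<open>auto intro: mult_left_le\<close>)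
    have g2s: "\<And>i. (\<lambda>j. m2 j * B2 i j) summable_on UNIV"
      by (rule summable_le_cmp[OF m2p(2)]) (use m2p B2nn B2le in \<open>auto intro: mult_left_le\<close>)
    define w where "w i j = D j * B1 i j + m2 j * \<bar>B1 i j - B2 i j\<bar>" for i j
    have ws: "\<And>i. w i summable_on UNIV"
    proof -
      fix i
      have "(\<lambda>j. D j * B1 i j) summable_on UNIV"
        by (rule summable_le_cmp[OF IH(1)]) (use B1nn B1le in \<open>auto simp: D_def intro: mult_left_le\<close>)
      moreover have "(\<lambda>j. m2 j * \<bar>B1 i j - B2 i j\<bar>) summable_on UNIV"
        by (rule summable_le_cmp[OF m2p(2)]) (use m2p dBle in \<open>auto intro: mult_left_le\<close>)
      ultimately show "w i summable_on UNIV" unfolding w_def by (rule summable_on_add)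
    qed
    have step: "\<And>i. \<bar>fpk_mass \<nu> DpH Dw1 \<rho> h r m0 (Suc k) i - fpk_mass \<nu> DpH Dw2 \<rho> h r m0 (Suc k) i\<bar>
                   \<le> infsum (w i) UNIV"
    proof -
      fix i
      have "fpk_mass \<nu> DpH Dw1 \<rho> h r m0 (Suc k) i - fpk_mass \<nu> DpH Dw2 \<rho> h r m0 (Suc k) i
          = infsum (\<lambda>j. m1 j * B1 i j) UNIV - infsum (\<lambda>j. m2 j * B2 i j) UNIV"
        by (simp add: m1_def m2_def B1_def B2_def)
      also have "\<dots> = infsum (\<lambda>j. m1 j * B1 i j + - (m2 j * B2 i j)) UNIV"
      proof -
        have a: "infsum (\<lambda>j. m1 j * B1 i j + - (m2 j * B2 i j)) UNIV
            = infsum (\<lambda>j. m1 j * B1 i j) UNIV + infsum (\<lambda>j. - (m2 j * B2 i j)) UNIV"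
          by (rule infsum_add[OF g1s]) (simp only: summable_on_uminus g2s)
        have b: "infsum (\<lambda>j. - (m2 j * B2 i j)) UNIV = - infsum (\<lambda>j. m2 j * B2 i j) UNIV"
          by (rule infsum_uminus)
        show ?thesis using a b by linarith
      qed
      finally have e: "fpk_mass \<nu> DpH Dw1 \<rho> h r m0 (Suc k) i - fpk_mass \<nu> DpH Dw2 \<rho> h r m0 (Suc k) i
          = infsum (\<lambda>j. m1 j * B1 i j + - (m2 j * B2 i j)) UNIV" .
      have "\<bar>infsum (\<lambda>j. m1 j * B1 i j + - (m2 j * B2 i j)) UNIV\<bar> \<le> infsum (w i) UNIV"
      proof (rule abs_infsum_le)
        show "(\<lambda>j. m1 j * B1 i j + - (m2 j * B2 i j)) summable_on UNIV"
          by (rule summable_on_add[OF g1s]) (simp only: summable_on_uminus g2s)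
        show "w i summable_on UNIV" by (rule ws)
        fix j
        have "m1 j * B1 i j + - (m2 j * B2 i j) = (m1 j - m2 j) * B1 i j + m2 j * (B1 i j - B2 i j)"
          by (simp add: algebra_simps)
        also have "\<bar>\<dots>\<bar> \<le> \<bar>(m1 j - m2 j) * B1 i j\<bar> + \<bar>m2 j * (B1 i j - B2 i j)\<bar>" by (rule abs_triangle_ineq)
        also have "\<dots> = w i j" using B1nn m2p by (simp add: w_def D_def abs_mult)
        finally show "\<bar>m1 j * B1 i j + - (m2 j * B2 i j)\<bar> \<le> w i j" .
      qed
      thus "\<bar>fpk_mass \<nu> DpH Dw1 \<rho> h r m0 (Suc k) i - fpk_mass \<nu> DpH Dw2 \<rho> h r m0 (Suc k) i\<bar>
                   \<le> infsum (w i) UNIV" using e by simp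
    qed
    have finb: "\<And>F. finite F \<Longrightarrow> (\<Sum>i\<in>F. \<bar>fpk_mass \<nu> DpH Dw1 \<rho> h r m0 (Suc k) i - fpk_mass \<nu> DpH Dw2 \<rho> h r m0 (Suc k) i\<bar>)
        \<le> real (Suc k) * C"
    proof -
      fix F :: "(int^'n) set" assume F: "finite F"
      have X: "(\<lambda>j. \<Sum>i\<in>F. w i j) summable_on UNIV \<and> (\<Sum>i\<in>F. infsum (w i) UNIV) = infsum (\<lambda>j. \<Sum>i\<in>F. w i j) UNIV"
        by (rule infsum_finsum[OF F]) (rule ws)
      have ys: "(\<lambda>j. D j + m2 j * C) summable_on UNIV"
        by (intro summable_on_add summable_on_cmult_left IH(1) m2p(2))
      have "(\<Sum>i\<in>F. \<bar>fpk_mass \<nu> DpH Dw1 \<rho> h r m0 (Suc k) i - fpk_mass \<nu> DpH Dw2 \<rho> h r m0 (Suc k) i\<bar>)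
           \<le> (\<Sum>i\<in>F. infsum (w i) UNIV)" by (rule sum_mono) (rule step)
      also have "\<dots> = infsum (\<lambda>j. \<Sum>i\<in>F. w i j) UNIV" using X by blast
      also have "\<dots> \<le> infsum (\<lambda>j. D j + m2 j * C) UNIV"
      proof (rule infsum_mono)
        show "(\<lambda>j. \<Sum>i\<in>F. w i j) summable_on UNIV" using X by blast
        show "(\<lambda>j. D j + m2 j * C) summable_on UNIV" by (rule ys)
        fix j
        have "(\<Sum>i\<in>F. w i j) = D j * (\<Sum>i\<in>F. B1 i j) + m2 j * (\<Sum>i\<in>F. \<bar>B1 i j - B2 i j\<bar>)"
          by (simp add: w_def sum.distrib sum_distrib_left)
        also have "\<dots> \<le> D j * 1 + m2 j * C"
          by (intro add_mono mult_left_mono B1fin[OF F] dBfin[OF F]) (use m2p in \<open>auto simp: D_def\<close>)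
        finally show "(\<Sum>i\<in>F. w i j) \<le> D j + m2 j * C" by simp
      qed
      also have "\<dots> = infsum D UNIV + infsum m2 UNIV * C"
        using IH(1) m2p(2) by (simp add: infsum_add summable_on_cmult_left infsum_cmult_left)
      also have "\<dots> \<le> real k * C + 1 * C"
        by (intro add_mono IH(2) mult_right_mono m2p(3) C0)
      finally show "(\<Sum>i\<in>F. \<bar>fpk_mass \<nu> DpH Dw1 \<rho> h r m0 (Suc k) i - fpk_mass \<nu> DpH Dw2 \<rho> h r m0 (Suc k) i\<bar>)
        \<le> real (Suc k) * C" by (simp add: algebra_simps)
    qed
    show "(\<lambda>i. \<bar>fpk_mass \<nu> DpH Dw1 \<rho> h r m0 (Suc k) i - fpk_mass \<nu> DpH Dw2 \<rho> h r m0 (Suc k) i\<bar>) summable_on UNIV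
     \<and> infsum (\<lambda>i. \<bar>fpk_mass \<nu> DpH Dw1 \<rho> h r m0 (Suc k) i - fpk_mass \<nu> DpH Dw2 \<rho> h r m0 (Suc k) i\<bar>) UNIV
        \<le> real (Suc k) * (exp (- h * jump_rate \<nu> r) * Lhat TYPE('n) * h * M / \<rho>)"
      using fin_bound[of "\<lambda>i. \<bar>fpk_mass \<nu> DpH Dw1 \<rho> h r m0 (Suc k) i - fpk_mass \<nu> DpH Dw2 \<rho> h r m0 (Suc k) i\<bar>"
          "real (Suc k) * C"] finb unfolding C_def by auto
  qed
qed



lemma infsum_cell:
  fixes a :: "int^'n \<Rightarrow> real"
  assumes r: "\<rho> > 0" and x: "x \<in> cell \<rho> i0"
  shows "infsum (\<lambda>i. a i * indicator (cell \<rho> i) x) UNIV = a i0"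
proof -
  have "infsum (\<lambda>i. a i * indicator (cell \<rho> i) x) UNIV = infsum (\<lambda>i. a i * indicator (cell \<rho> i) x) {i0}"
    by (rule infsum_cong_neutral) (use cell_disj[OF r x] in \<open>auto simp: indicator_def\<close>)
  also have "\<dots> = a i0" using x by simp
  finally show ?thesis .
qed

lemma infsum_cell0:
  fixes a :: "int^'n \<Rightarrow> real"
  assumes "\<And>i. x \<notin> cell \<rho> i"
  shows "infsum (\<lambda>i. a i * indicator (cell \<rho> i) x) UNIV = 0"
  using assms by simp

lemma L1_gen:
  fixes F :: "real^'n \<Rightarrow> real" and g :: "int^'n \<Rightarrow> real"
  assumes r: "\<rho> > 0" and gnn: "\<And>i. 0 \<le> g i" and gs: "g summable_on UNIV"
    and in_cell: "\<And>x i0. x \<in> cell \<rho> i0 \<Longrightarrow> \<bar>F x\<bar> \<le> g i0 / \<rho> ^ CARD('n)"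
    and out: "\<And>x. (\<And>i. x \<notin> cell \<rho> i) \<Longrightarrow> F x = 0"
  shows "(\<integral>\<^sup>+x. ennreal \<bar>F x\<bar> \<partial>lborel) \<le> ennreal (infsum g UNIV)"
proof -
  define d where "d = (\<rho> ^ CARD('n) :: real)"
  have d: "d > 0" using r by (simp add: d_def)
  have pw: "ennreal \<bar>F x\<bar> \<le> (\<integral>\<^sup>+i. ennreal (g i / d) * indicator (cell \<rho> i) x \<partial>count_space UNIV)" for x
  proof (cases "\<exists>i0. x \<in> cell \<rho> i0")
    case True
    then obtain i0 where x: "x \<in> cell \<rho> i0" by blast
    have "(\<integral>\<^sup>+i. ennreal (g i / d) * indicator (cell \<rho> i) x \<partial>count_space UNIV)
        = (\<integral>\<^sup>+i. ennreal (g i0 / d) * indicator {i0} i \<partial>count_space UNIV)"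
    proof (rule nn_integral_cong)
      fix i
      show "ennreal (g i / d) * indicator (cell \<rho> i) x = ennreal (g i0 / d) * indicator {i0} i"
      proof (cases "i = i0")
        case True thus ?thesis using x by simp
      next
        case False
        hence "x \<notin> cell \<rho> i" using cell_disj[OF r x] by blast
        thus ?thesis using False by simp
      qed
    qed
    also have "\<dots> = ennreal (g i0 / d)" by (simp add: nn_integral_cmult_indicator)
    finally show ?thesis using in_cell[OF x] by (simp add: d_def)
  next
    case False
    thus ?thesis using out[of x] by simp
  qed
  have "(\<integral>\<^sup>+x. ennreal \<bar>F x\<bar> \<partial>lborel)
      \<le> (\<integral>\<^sup>+x. (\<integral>\<^sup>+i. ennreal (g i / d) * indicator (cell \<rho> i) x \<partial>count_space UNIV) \<partial>lborel)"
    by (rule nn_integral_mono) (rule pw)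
  also have "\<dots> = (\<integral>\<^sup>+i. (\<integral>\<^sup>+x. ennreal (g i / d) * indicator (cell \<rho> i) x \<partial>lborel) \<partial>count_space UNIV)"
  proof (rule nn_integral_count_space_nn_integral)
    show "countable (UNIV :: (int^'n) set)" by simp
    fix i :: "int^'n"
    have "cell \<rho> i \<in> sets borel" by (rule borel_open[OF cell_open])
    thus "(\<lambda>x. ennreal (g i / d) * indicator (cell \<rho> i) x) \<in> borel_measurable lborel" by measurable
  qed
  also have "\<dots> = (\<integral>\<^sup>+i. ennreal (g i) \<partial>count_space UNIV)"
  proof (rule nn_integral_cong)
    fix i :: "int^'n"
    have "(\<integral>\<^sup>+x. ennreal (g i / d) * indicator (cell \<rho> i) x \<partial>lborel) = ennreal (g i / d) * emeasure lborel (cell \<rho> i)"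
      by (rule nn_integral_cmult_indicator) (simp add: borel_open[OF cell_open])
    also have "\<dots> = ennreal (g i / d) * ennreal d" by (simp add: emeasure_cell[OF r] d_def)
    also have "\<dots> = ennreal (g i / d * d)"
      by (rule ennreal_mult[symmetric]) (use d gnn[of i] in auto)
    also have "\<dots> = ennreal (g i)" using d by simp
    finally show "(\<integral>\<^sup>+x. ennreal (g i / d) * indicator (cell \<rho> i) x \<partial>lborel) = ennreal (g i)" .
  qed
  also have "\<dots> = ennreal (infsum g UNIV)"
  proof -
    have "Infinite_Set_Sum.abs_summable_on g UNIV"
      using abs_summable_equivalent[of g UNIV] gs gnn by simp
    hence "nn_integral (count_space UNIV) g = ennreal (infsetsum g UNIV)"
      by (rule nn_integral_conv_infsetsum) (simp add: gnn)
    also have "infsetsum g UNIV = infsum g UNIV" by (rule infsetsum_infsum) fact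
    finally show ?thesis by simp
  qed
  finally show ?thesis .
qed



lemma nu_fin:
  fixes \<nu> :: "(real^'n) measure"
  assumes nu: "sets \<nu> = sets borel" and int: "(\<integral>\<^sup>+ z. ennreal (min 1 (norm z ^ 2)) \<partial>\<nu>) < \<infinity>"
    and r: "r > 0"
  shows "emeasure \<nu> {z. r < norm z} < \<infinity>"
proof -
  define A where "A = {z::real^'n. r < norm z}"
  define c where "c = min 1 (r ^ 2)"
  have c: "c > 0" using r by (simp add: c_def)
  have A: "A \<in> sets \<nu>" unfolding A_def by (rule jump_set_sets[OF nu])
  have "ennreal c * emeasure \<nu> A = (\<integral>\<^sup>+ z. ennreal c * indicator A z \<partial>\<nu>)"
    by (rule nn_integral_cmult_indicator[symmetric, OF A])
  also have "\<dots> \<le> (\<integral>\<^sup>+ z. ennreal (min 1 (norm z ^ 2)) \<partial>\<nu>)"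
  proof (rule nn_integral_mono)
    fix z
    show "ennreal c * indicator A z \<le> ennreal (min 1 (norm z ^ 2))"
    proof (cases "z \<in> A")
      case True
      hence "r < norm z" by (simp add: A_def)
      hence "r ^ 2 \<le> norm z ^ 2" using r by (intro power_mono) auto
      hence "c \<le> min 1 (norm z ^ 2)" by (simp add: c_def min_def)
      thus ?thesis using True by simp
    qed simp
  qed
  also have "\<dots> < \<infinity>" by (rule int)
  finally have "ennreal c * emeasure \<nu> A < \<infinity>" .
  hence "emeasure \<nu> A = 0 \<or> emeasure \<nu> A < \<infinity>" using c by (simp add: ennreal_mult_less_top)
  thus ?thesis unfolding A_def by auto
qed

lemma comb_aux: "(1 - s) * (a1 / d) + s * (b1 / d) - ((1 - s) * (a2 / d) + s * (b2 / d))
   = ((1 - s) * (a1 - a2) + s * (b1 - b2)) / (d::real)"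
  by (simp add: diff_divide_distrib add_divide_distrib right_diff_distrib left_diff_distrib)

lemma time_bound:
  fixes \<nu> m0 :: "(real^'n) measure"
  assumes nu: "sets \<nu> = sets borel" and fin: "emeasure \<nu> {z. r < norm z} < \<infinity>"
    and pm: "prob_space m0" and sm: "sets m0 = sets borel" and r: "\<rho> > 0"
    and N: "N > 0" and T: "T > 0" and M0: "0 \<le> M"
    and bnd: "\<And>t x. t \<in> {0..T} \<Longrightarrow> norm (DpH x (Dwa t x) - DpH x (Dwb t x)) \<le> M"
    and t: "t \<in> {0..T}"
  shows "(\<integral>\<^sup>+ x. ennreal \<bar>fpk_dens \<nu> DpH Dwa \<rho> (T / real N) r m0 t x - fpk_dens \<nu> DpH Dwb \<rho> (T / real N) r m0 t x\<bar> \<partial>lborel)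
     \<le> ennreal (real N * (exp (- (T / real N) * jump_rate \<nu> r) * Lhat TYPE('n) * (T / real N) * M / \<rho>))"
proof -
  define h where "h = T / real N"
  have h: "h > 0" using T N by (simp add: h_def)
  define C where "C = exp (- h * jump_rate \<nu> r) * Lhat TYPE('n) * h * M / \<rho>"
  have C0: "0 \<le> C" unfolding C_def using Lhat_pos[where 'n='n] h M0 r by simp
  define D where "D k i = \<bar>fpk_mass \<nu> DpH Dwa \<rho> h r m0 k i - fpk_mass \<nu> DpH Dwb \<rho> h r m0 k i\<bar>" for k i
  have Dk: "D k summable_on UNIV \<and> infsum (D k) UNIV \<le> real N * C" if k: "k \<le> N" for k
  proof -
    have hyp: "\<forall>k'<k. \<forall>j. norm (DpH (gridpt \<rho> j) (Dwa (real k' * h) (gridpt \<rho> j))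
                         - DpH (gridpt \<rho> j) (Dwb (real k' * h) (gridpt \<rho> j))) \<le> M"
    proof (intro allI impI)
      fix k' j assume k': "k' < k"
      have "real k' * h \<in> {0..T}"
      proof -
        have "real k' \<le> real N" using k' k by simp
        hence "real k' * h \<le> real N * h" using h by (intro mult_right_mono) auto
        also have "real N * h = T" using N by (simp add: h_def)
        finally show ?thesis using h by simp
      qed
      thus "norm (DpH (gridpt \<rho> j) (Dwa (real k' * h) (gridpt \<rho> j))
                         - DpH (gridpt \<rho> j) (Dwb (real k' * h) (gridpt \<rho> j))) \<le> M" by (rule bnd)
    qed
    have X: "D k summable_on UNIV \<and> infsum (D k) UNIV \<le> real k * C"
      using mass_diff[OF nu fin pm sm r less_imp_le[OF h] M0, of k DpH Dwa Dwb] hyp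
      unfolding D_def C_def by blast
    have "real k * C \<le> real N * C" using k C0 by (intro mult_right_mono) auto
    thus ?thesis using X by linarith
  qed
  have Dnn: "\<And>k i. 0 \<le> D k i" by (simp add: D_def)
  define kk where "kk = nat \<lfloor>t / h\<rfloor>"
  define s where "s = t / h - real kk"
  have th: "0 \<le> t / h" "t / h \<le> real N" using t h T N by (auto simp: h_def field_simps)
  have kk1: "real kk \<le> t / h" "t / h < real kk + 1" using th unfolding kk_def by linarith+
  have s01: "0 \<le> s" "s < 1" using kk1 by (auto simp: s_def)
  have kkN: "kk \<le> N" using kk1 th by linarith
  have kkN2: "s \<noteq> 0 \<Longrightarrow> Suc kk \<le> N"
  proof -
    assume "s \<noteq> 0"
    hence "real kk < real N" using s01 th by (simp add: s_def)
    thus "Suc kk \<le> N" by simp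
  qed
  have dens: "fpk_dens \<nu> DpH Dw \<rho> h r m0 t x = (1 - s) * fpk_dens_k \<nu> DpH Dw \<rho> h r m0 kk x
      + s * fpk_dens_k \<nu> DpH Dw \<rho> h r m0 (Suc kk) x" for Dw x
    unfolding fpk_dens_def Let_def kk_def s_def ..
  define g where "g i = (1 - s) * D kk i + (if s = 0 then 0 else s * D (Suc kk) i)" for i
  have gnn: "\<And>i. 0 \<le> g i" using s01 Dnn by (simp add: g_def)
  have gs: "g summable_on UNIV \<and> infsum g UNIV \<le> real N * C"
  proof (cases "s = 0")
    case True
    hence "g = D kk" by (simp add: g_def fun_eq_iff)
    thus ?thesis using Dk[OF kkN] by simp
  next
    case False
    have a: "D kk summable_on UNIV" "infsum (D kk) UNIV \<le> real N * C" using Dk[OF kkN] by auto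
    have b: "D (Suc kk) summable_on UNIV" "infsum (D (Suc kk)) UNIV \<le> real N * C" using Dk[OF kkN2[OF False]] by auto
    have geq: "g = (\<lambda>i. D kk i * (1 - s) + D (Suc kk) i * s)" using False by (simp add: g_def fun_eq_iff algebra_simps)
    have sa: "(\<lambda>i. D kk i * (1 - s)) summable_on UNIV" by (rule summable_on_cmult_left[OF a(1)])
    have sb: "(\<lambda>i. D (Suc kk) i * s) summable_on UNIV" by (rule summable_on_cmult_left[OF b(1)])
    have "infsum g UNIV = infsum (D kk) UNIV * (1 - s) + infsum (D (Suc kk)) UNIV * s"
      unfolding geq using sa sb a b by (simp add: infsum_add infsum_cmult_left)
    also have "\<dots> \<le> (real N * C) * (1 - s) + (real N * C) * s"
      using a b s01 by (intro add_mono mult_right_mono) auto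
    also have "\<dots> = real N * C" by (simp add: algebra_simps)
    finally show ?thesis unfolding geq using summable_on_add[OF sa sb] by simp
  qed
  have "(\<integral>\<^sup>+ x. ennreal \<bar>fpk_dens \<nu> DpH Dwa \<rho> h r m0 t x - fpk_dens \<nu> DpH Dwb \<rho> h r m0 t x\<bar> \<partial>lborel)
       \<le> ennreal (infsum g UNIV)"
  proof (rule L1_gen[OF r gnn])
    show "g summable_on UNIV" using gs by blast
    fix x :: "real^'n"
    { fix i0 assume x: "x \<in> cell \<rho> i0"
      have dk: "fpk_dens_k \<nu> DpH Dw \<rho> h r m0 k x = fpk_mass \<nu> DpH Dw \<rho> h r m0 k i0 / \<rho> ^ CARD('n)" for Dw k
        unfolding fpk_dens_k_def by (simp only: infsum_cell[OF r x])
      have "fpk_dens \<nu> DpH Dwa \<rho> h r m0 t x - fpk_dens \<nu> DpH Dwb \<rho> h r m0 t x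
          = ((1 - s) * (fpk_mass \<nu> DpH Dwa \<rho> h r m0 kk i0 - fpk_mass \<nu> DpH Dwb \<rho> h r m0 kk i0)
            + s * (fpk_mass \<nu> DpH Dwa \<rho> h r m0 (Suc kk) i0 - fpk_mass \<nu> DpH Dwb \<rho> h r m0 (Suc kk) i0)) / \<rho> ^ CARD('n)"
        unfolding dens dk by (rule comb_aux)
      also have "\<bar>\<dots>\<bar> \<le> g i0 / \<rho> ^ CARD('n)"
      proof -
        have "\<bar>(1 - s) * (fpk_mass \<nu> DpH Dwa \<rho> h r m0 kk i0 - fpk_mass \<nu> DpH Dwb \<rho> h r m0 kk i0)
            + s * (fpk_mass \<nu> DpH Dwa \<rho> h r m0 (Suc kk) i0 - fpk_mass \<nu> DpH Dwb \<rho> h r m0 (Suc kk) i0)\<bar> \<le> g i0"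
        proof (cases "s = 0")
          case True thus ?thesis by (simp add: g_def D_def)
        next
          case False
          define A where "A = fpk_mass \<nu> DpH Dwa \<rho> h r m0 kk i0 - fpk_mass \<nu> DpH Dwb \<rho> h r m0 kk i0"
          define B where "B = fpk_mass \<nu> DpH Dwa \<rho> h r m0 (Suc kk) i0 - fpk_mass \<nu> DpH Dwb \<rho> h r m0 (Suc kk) i0"
          have "\<bar>(1 - s) * A + s * B\<bar> \<le> \<bar>(1 - s) * A\<bar> + \<bar>s * B\<bar>" by (rule abs_triangle_ineq)
          also have "\<dots> = (1 - s) * \<bar>A\<bar> + s * \<bar>B\<bar>" using s01 by (simp add: abs_mult)
          also have "\<dots> = g i0" using False by (simp add: g_def D_def A_def B_def)
          finally show ?thesis unfolding A_def B_def .
        qed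
        moreover have "(0::real) < \<rho> ^ CARD('n)" using r by simp
        ultimately show ?thesis by (simp add: abs_divide divide_right_mono)
      qed
      finally show "\<bar>fpk_dens \<nu> DpH Dwa \<rho> h r m0 t x - fpk_dens \<nu> DpH Dwb \<rho> h r m0 t x\<bar> \<le> g i0 / \<rho> ^ CARD('n)" .
    }
    { assume out: "\<And>i. x \<notin> cell \<rho> i"
      have dk: "fpk_dens_k \<nu> DpH Dw \<rho> h r m0 k x = 0" for Dw k
        unfolding fpk_dens_k_def using out by simp
      show "fpk_dens \<nu> DpH Dwa \<rho> h r m0 t x - fpk_dens \<nu> DpH Dwb \<rho> h r m0 t x = 0"
        unfolding dens dk by simp
    }
  qed
  also have "\<dots> \<le> ennreal (real N * C)" using gs by (simp add: ennreal_leI)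
  finally show ?thesis unfolding C_def h_def .
qed



theorem mainTheorem15:
  shows "\<exists>c K. c > 0 \<and> K > 0 \<and>
    (\<forall>(\<nu>::(real^'n) measure) (H::real^'n \<Rightarrow> real^'n \<Rightarrow> real) DpH
       (m0::(real^'n) measure) T (N::nat) \<rho> r (\<epsilon>::real)
       (u::(real \<Rightarrow> (real^'n) measure) \<Rightarrow> real \<Rightarrow> real^'n \<Rightarrow> real)
       (Du::(real \<Rightarrow> (real^'n) measure) \<Rightarrow> real \<Rightarrow> real^'n \<Rightarrow> real^'n)
       \<mu>1 \<mu>2.
      \<comment> \<open>(nu0): nu nonnegative measure on R^d minus 0 with int min(1,|z|^2) < infinity\<close>
      sets \<nu> = sets borel \<and> emeasure \<nu> {0} = 0 \<and>
      (\<integral>\<^sup>+ z. ennreal (min 1 (norm z ^ 2)) \<partial>\<nu>) < \<infinity> \<and>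
      \<comment> \<open>(H1)\<close>
      (\<forall>x p. (H x has_derivative (\<lambda>v. DpH x p \<bullet> v)) (at p)) \<and>
      continuous_on UNIV (\<lambda>z. DpH (fst z) (snd z)) \<and>
      (\<forall>R. \<exists>C. \<forall>x p. norm p \<le> R \<longrightarrow> norm (DpH x p) \<le> C) \<and>
      \<comment> \<open>initial datum, parameters\<close>
      prob_space m0 \<and> sets m0 = sets borel \<and>
      T > 0 \<and> N > 0 \<and> \<rho> > 0 \<and> r > 0 \<and> \<epsilon> > 0 \<and>
      \<comment> \<open>mu1, mu2 in C([0,T], P(R^d))\<close>
      weakly_continuous_flow T \<mu>1 \<and> weakly_continuous_flow T \<mu>2 \<and>
      \<comment> \<open>u[mu] is differentiable and Lipschitz in x, with spatial gradient Du[mu]\<close>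
      (\<forall>\<mu>\<in>{\<mu>1, \<mu>2}. (\<forall>t x. (u \<mu> t has_derivative (\<lambda>v. Du \<mu> t x \<bullet> v)) (at x)) \<and>
          (\<exists>L. \<forall>t x y. \<bar>u \<mu> t x - u \<mu> t y\<bar> \<le> L * norm (x - y)))
      \<longrightarrow>
      (SUP t\<in>{0..T}. \<integral>\<^sup>+ x. ennreal \<bar>fpk_dens \<nu> DpH (Du \<mu>1) \<rho> (T / real N) r m0 t x
                                   - fpk_dens \<nu> DpH (Du \<mu>2) \<rho> (T / real N) r m0 t x\<bar> \<partial>lborel)
      \<le> ennreal (c * K * T / \<rho> * exp (- (T / real N) * jump_rate \<nu> r)) *
        (SUP t\<in>{0..T}. SUP x. ennreal (norm (DpH x (Du \<mu>1 t x) - DpH x (Du \<mu>2 t x)))))"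
proof (rule exI[of _ "Lhat TYPE('n)"], rule exI[of _ 1], intro conjI Lhat_pos zero_less_one allI impI)
  fix \<nu> :: "(real^'n) measure" and H :: "real^'n \<Rightarrow> real^'n \<Rightarrow> real" and DpH :: "real^'n \<Rightarrow> real^'n \<Rightarrow> real^'n"
    and m0 :: "(real^'n) measure" and T :: real and N :: nat and \<rho> r :: real and \<epsilon> :: real
    and u :: "(real \<Rightarrow> (real^'n) measure) \<Rightarrow> real \<Rightarrow> real^'n \<Rightarrow> real"
    and Du :: "(real \<Rightarrow> (real^'n) measure) \<Rightarrow> real \<Rightarrow> real^'n \<Rightarrow> real^'n"
    and \<mu>1 \<mu>2 :: "real \<Rightarrow> (real^'n) measure"
  assume A: "sets \<nu> = sets borel \<and> emeasure \<nu> {0} = 0 \<and>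
      (\<integral>\<^sup>+ z. ennreal (min 1 (norm z ^ 2)) \<partial>\<nu>) < \<infinity> \<and>
      (\<forall>x p. (H x has_derivative (\<lambda>v. DpH x p \<bullet> v)) (at p)) \<and>
      continuous_on UNIV (\<lambda>z. DpH (fst z) (snd z)) \<and>
      (\<forall>R. \<exists>C. \<forall>x p. norm p \<le> R \<longrightarrow> norm (DpH x p) \<le> C) \<and>
      prob_space m0 \<and> sets m0 = sets borel \<and>
      T > 0 \<and> N > 0 \<and> \<rho> > 0 \<and> r > 0 \<and> \<epsilon> > 0 \<and>
      weakly_continuous_flow T \<mu>1 \<and> weakly_continuous_flow T \<mu>2 \<and>
      (\<forall>\<mu>\<in>{\<mu>1, \<mu>2}. (\<forall>t x. (u \<mu> t has_derivative (\<lambda>v. Du \<mu> t x \<bullet> v)) (at x)) \<and>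
          (\<exists>L. \<forall>t x y. \<bar>u \<mu> t x - u \<mu> t y\<bar> \<le> L * norm (x - y)))"
  have nu: "sets \<nu> = sets borel" using A by blast
  have int: "(\<integral>\<^sup>+ z. ennreal (min 1 (norm z ^ 2)) \<partial>\<nu>) < \<infinity>" using A by blast
  have pm: "prob_space m0" and sm: "sets m0 = sets borel" using A by blast+
  have T: "T > 0" and N: "N > 0" and r: "\<rho> > 0" and r0: "r > 0" using A by blast+
  have fin: "emeasure \<nu> {z. r < norm z} < \<infinity>" by (rule nu_fin[OF nu int r0])
  define S where "S = (SUP t\<in>{0..T}. SUP x. ennreal (norm (DpH x (Du \<mu>1 t x) - DpH x (Du \<mu>2 t x))))"
  define a where "a = Lhat TYPE('n) * 1 * T / \<rho> * exp (- (T / real N) * jump_rate \<nu> r)"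
  have a: "a > 0" unfolding a_def using Lhat_pos[where 'n='n] T r by simp
  have key: "(SUP t\<in>{0..T}. \<integral>\<^sup>+ x. ennreal \<bar>fpk_dens \<nu> DpH (Du \<mu>1) \<rho> (T / real N) r m0 t x
                                   - fpk_dens \<nu> DpH (Du \<mu>2) \<rho> (T / real N) r m0 t x\<bar> \<partial>lborel)
      \<le> ennreal a * S"
  proof (cases "S = \<infinity>")
    case True
    have "ennreal a \<noteq> 0" using a by simp
    thus ?thesis using True by (simp add: ennreal_mult_top)
  next
    case False
    define M where "M = enn2real S"
    have Slt: "S < \<infinity>" using False by (simp add: top.not_eq_extremum)
    have SM: "S = ennreal M" unfolding M_def using Slt by simp
    have M0: "0 \<le> M" by (simp add: M_def)
    have bnd: "norm (DpH x (Du \<mu>1 t x) - DpH x (Du \<mu>2 t x)) \<le> M" if t: "t \<in> {0..T}" for t x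
    proof -
      have "ennreal (norm (DpH x (Du \<mu>1 t x) - DpH x (Du \<mu>2 t x))) \<le> S"
        unfolding S_def by (rule SUP_upper2[OF t]) (rule SUP_upper, simp)
      thus ?thesis using SM M0 by simp
    qed
    show ?thesis
    proof (rule SUP_least)
      fix t :: real assume t: "t \<in> {0..T}"
      have "(\<integral>\<^sup>+ x. ennreal \<bar>fpk_dens \<nu> DpH (Du \<mu>1) \<rho> (T / real N) r m0 t x
                                   - fpk_dens \<nu> DpH (Du \<mu>2) \<rho> (T / real N) r m0 t x\<bar> \<partial>lborel)
        \<le> ennreal (real N * (exp (- (T / real N) * jump_rate \<nu> r) * Lhat TYPE('n) * (T / real N) * M / \<rho>))"
        by (rule time_bound[where Dwa="Du \<mu>1" and Dwb="Du \<mu>2", OF nu fin pm sm r N T M0 bnd t])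
      also have "ennreal (real N * (exp (- (T / real N) * jump_rate \<nu> r) * Lhat TYPE('n) * (T / real N) * M / \<rho>)) = ennreal a * S"
      proof -
        have "real N * (exp (- (T / real N) * jump_rate \<nu> r) * Lhat TYPE('n) * (T / real N) * M / \<rho>) = a * M"
          using N unfolding a_def by (simp add: field_simps)
        moreover have "ennreal (a * M) = ennreal a * ennreal M" using a M0 by (simp add: ennreal_mult)
        ultimately show ?thesis using SM by simp
      qed
      finally show "(\<integral>\<^sup>+ x. ennreal \<bar>fpk_dens \<nu> DpH (Du \<mu>1) \<rho> (T / real N) r m0 t x
                                   - fpk_dens \<nu> DpH (Du \<mu>2) \<rho> (T / real N) r m0 t x\<bar> \<partial>lborel) \<le> ennreal a * S" .
    qed
  qed
  thus "(SUP t\<in>{0..T}. \<integral>\<^sup>+ x. ennreal \<bar>fpk_dens \<nu> DpH (Du \<mu>1) \<rho> (T / real N) r m0 t x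
                                   - fpk_dens \<nu> DpH (Du \<mu>2) \<rho> (T / real N) r m0 t x\<bar> \<partial>lborel)
      \<le> ennreal (Lhat TYPE('n) * 1 * T / \<rho> * exp (- (T / real N) * jump_rate \<nu> r)) *
        (SUP t\<in>{0..T}. SUP x. ennreal (norm (DpH x (Du \<mu>1 t x) - DpH x (Du \<mu>2 t x))))"
    unfolding a_def S_def .
qed

end
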